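(* Every $4$-unitrade of cardinality $9$ is equivalent to $P=\{\{1,2,5,6\}, \{1,3,5,6\}, \{2,3,5,6\}, \{1,2,4,6\}, \{1,3,4,6\}, \{2,3,4,6\}, \{1,2,4,5\}, \{1,3,4,5\}, \{2,3,4,5\}\}$ (and $P$ is a $4$-unitrade of cardinality $9$).
   Context: A $k$-unitrade on a finite set $V$ is a set $U$ of $k$-element subsets (blocks) of $V$ such that every $(k-1)$-element subset of $V$ is contained in an even number of blocks of $U$. Two collections $U_1$ of subsets of $V_1$ and $U_2$ of subsets of $V_2$ are equivalent if there is an injection $f:V_1\to V_2$ with $U_2=\{f(u): u\in U_1\}$. *)

theory Defs
  imports Main
begin

definition unitrade :: "nat \<Rightarrow> 'a set \<Rightarrow> 'a set set \<Rightarrow> bool" where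
  "unitrade k V U \<longleftrightarrow> finite V \<and> (\<forall>B\<in>U. B \<subseteq> V \<and> card B = k) \<and>
     (\<forall>S. S \<subseteq> V \<and> card S = k - 1 \<longrightarrow> even (card {B\<in>U. S \<subseteq> B}))"

definition equivalent :: "'a set \<Rightarrow> 'a set set \<Rightarrow> 'b set \<Rightarrow> 'b set set \<Rightarrow> bool" where
  "equivalent V1 U1 V2 U2 \<longleftrightarrow>
     (\<exists>f. inj_on f V1 \<and> f ` V1 \<subseteq> V2 \<and> U2 = (\<lambda>u. f ` u) ` U1)"

definition P_trade :: "nat set set" where
  "P_trade = {{1,2,5,6}, {1,3,5,6}, {2,3,5,6}, {1,2,4,6}, {1,3,4,6}, {2,3,4,6},
              {1,2,4,5}, {1,3,4,5}, {2,3,4,5}}"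

end

theory Submission
  imports Defs
begin

lemma filter_insert_aux: "{x \<in> insert a A. P x} = (if P a then insert a {x\<in>A. P x} else {x\<in>A. P x})"
  by auto
lemma filter_empty_aux: "{x \<in> {}. P x} = {}" by auto
lemma P_ok: "unitrade 4 {1..6::nat} P_trade \<and> card P_trade = 9"
  unfolding unitrade_def
proof (intro conjI allI impI)
  show "card P_trade = 9" unfolding P_trade_def by (simp add: set_eq_subset)
  show "\<forall>B\<in>P_trade. B \<subseteq> {1..6} \<and> card B = 4" unfolding P_trade_def by auto
  have A: "\<forall>S \<in> Pow {1,2,3,4,5,6::nat}. card S = 3 \<longrightarrow> even (card {B \<in> P_trade. S \<subseteq> B})"
    apply (simp only: Pow_insert Pow_empty image_insert image_empty Un_insert_left Un_empty_left Un_insert_right Un_empty_right ball_simps)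
    apply (simp only: P_trade_def filter_insert_aux filter_empty_aux)
    apply (simp add: set_eq_subset)
    done
  fix S :: "nat set" assume "S \<subseteq> {1..6} \<and> card S = 4 - 1"
  moreover have "{1..6::nat} = {1,2,3,4,5,6}" by auto
  ultimately show "even (card {B \<in> P_trade. S \<subseteq> B})" using A by auto
qed simp


definition ut :: "nat \<Rightarrow> 'a set set \<Rightarrow> bool" where
  "ut k U \<longleftrightarrow> finite U \<and> (\<forall>B\<in>U. finite B \<and> card B = k) \<and>
     (\<forall>S. finite S \<and> card S + 1 = k \<longrightarrow> even (card {B\<in>U. S \<subseteq> B}))"

definition deg :: "'a set set \<Rightarrow> 'a \<Rightarrow> nat" where "deg U x = card {B\<in>U. x\<in>B}"
definition der :: "'a set set \<Rightarrow> 'a \<Rightarrow> 'a set set" where "der U x = (\<lambda>B. B - {x}) ` {B\<in>U. x\<in>B}"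

lemma ut_fin: "ut k U \<Longrightarrow> finite U" by (simp add: ut_def)
lemma ut_card: "ut k U \<Longrightarrow> B \<in> U \<Longrightarrow> finite B \<and> card B = k" by (simp add: ut_def)
lemma ut_even: "ut k U \<Longrightarrow> finite S \<Longrightarrow> card S + 1 = k \<Longrightarrow> even (card {B\<in>U. S \<subseteq> B})"
  by (simp add: ut_def)

lemma other_block:
  assumes "ut k U" "B \<in> U" "S \<subseteq> B" "finite S" "card S + 1 = k"
  shows "\<exists>B'\<in>U. B' \<noteq> B \<and> S \<subseteq> B'"
proof (rule ccontr)
  assume "\<not> ?thesis"
  then have "{B\<in>U. S \<subseteq> B} = {B}" using assms by auto
  then show False using ut_even[OF assms(1,4,5)] by simp
qed

lemma G1:
  assumes "ut k U" "1 \<le> k"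
  shows "ut (k-1) (der U x)" "card (der U x) = deg U x"
proof -
  have inj: "inj_on (\<lambda>B. B - {x}) {B\<in>U. x\<in>B}"
    by (rule inj_onI) (metis insert_Diff mem_Collect_eq)
  show "card (der U x) = deg U x" unfolding der_def deg_def using card_image[OF inj] .
  show "ut (k-1) (der U x)" unfolding ut_def
  proof (intro conjI)
    show "finite (der U x)" using ut_fin[OF assms(1)] unfolding der_def by simp
  next
    show "\<forall>B'\<in>der U x. finite B' \<and> card B' = k - 1"
    proof
      fix B' assume "B' \<in> der U x"
      then obtain B where "B\<in>U" "x\<in>B" "B' = B - {x}" unfolding der_def by auto
      then show "finite B' \<and> card B' = k - 1" using ut_card[OF assms(1)] by auto
    qed
  next
    show "\<forall>S. finite S \<and> card S + 1 = k - 1 \<longrightarrow> even (card {B\<in>der U x. S \<subseteq> B})"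
    proof (intro allI impI)
    fix S :: "'a set" assume S: "finite S \<and> card S + 1 = k - 1"
    show "even (card {B\<in>der U x. S \<subseteq> B})"
    proof (cases "x \<in> S")
      case True
      then have "{B\<in>der U x. S \<subseteq> B} = {}" unfolding der_def by auto
      then show ?thesis by (metis card.empty dvd_0_right)
    next
      case False
      have "{B\<in>der U x. S \<subseteq> B} = (\<lambda>B. B - {x}) ` {B\<in>U. insert x S \<subseteq> B}"
        unfolding der_def using False by auto
      moreover have "inj_on (\<lambda>B. B - {x}) {B\<in>U. insert x S \<subseteq> B}"
        using inj by (rule inj_on_subset) auto
      ultimately have "card {B\<in>der U x. S \<subseteq> B} = card {B\<in>U. insert x S \<subseteq> B}"
        by (simp add: card_image)
      moreover have "card (insert x S) + 1 = k" using S False assms(2) by simp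
      ultimately show ?thesis using ut_even[OF assms(1), of "insert x S"] S by simp
    qed
    qed
  qed
qed

lemma nbrs:
  assumes "ut k U" "1 \<le> k" "B \<in> U"
  obtains f where "\<forall>b\<in>B. f b \<in> U \<and> f b \<noteq> B \<and> B - {b} \<subseteq> f b" "inj_on f B"
    "B \<notin> f ` B" "card (insert B (f ` B)) = k + 1" "insert B (f ` B) \<subseteq> U"
proof -
  have fB: "finite B" "card B = k" using ut_card[OF assms(1,3)] by auto
  have "\<forall>b\<in>B. \<exists>B'\<in>U. B' \<noteq> B \<and> B - {b} \<subseteq> B'"
  proof
    fix b assume "b\<in>B"
    show "\<exists>B'\<in>U. B' \<noteq> B \<and> B - {b} \<subseteq> B'"
      by (rule other_block[OF assms(1,3)]) (use fB \<open>b\<in>B\<close> assms(2) in auto)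
  qed
  then have ex: "\<forall>b\<in>B. \<exists>B'. B'\<in>U \<and> B' \<noteq> B \<and> B - {b} \<subseteq> B'" by blast
  obtain f where f: "\<forall>b\<in>B. f b \<in> U \<and> f b \<noteq> B \<and> B - {b} \<subseteq> f b"
    using bchoice[OF ex] by blast
  have inj: "inj_on f B"
  proof (rule inj_onI, rule ccontr)
    fix b c assume "b\<in>B" "c\<in>B" "f b = f c" "b \<noteq> c"
    then have "B - {b} \<subseteq> f b" "B - {c} \<subseteq> f b" using f by auto
    then have "B \<subseteq> f b" using \<open>b \<noteq> c\<close> by blast
    moreover have "finite (f b)" "card (f b) = k" using ut_card[OF assms(1)] f \<open>b\<in>B\<close> by auto
    ultimately have "B = f b" using fB card_subset_eq by metis
    then show False using f \<open>b\<in>B\<close> by auto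
  qed
  have nB: "B \<notin> f ` B" using f by auto
  have "card (insert B (f ` B)) = k + 1" using inj nB fB by (simp add: card_image)
  moreover have "insert B (f ` B) \<subseteq> U" using f assms(3) by auto
  ultimately show ?thesis using that f inj nB by blast
qed

lemma LB:
  assumes "ut k U" "1 \<le> k" "card U \<noteq> 0"
  shows "k + 1 \<le> card U"
proof -
  obtain B where "B \<in> U" using assms(3) by fastforce
  obtain f where "card (insert B (f ` B)) = k + 1" "insert B (f ` B) \<subseteq> U"
    by (rule nbrs[OF assms(1,2) \<open>B \<in> U\<close>]) blast
  then show ?thesis using card_mono[OF ut_fin[OF assms(1)], of "insert B (f ` B)"] by simp
qed



lemma G3:
  assumes D: "ut j D" and j: "2 \<le> j" and cD: "card D = j + 1"
  shows "\<exists>Y. finite Y \<and> card Y = j + 1 \<and> Y \<subseteq> \<Union>D \<and>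
             (\<forall>S. finite S \<and> card S = j \<longrightarrow> (S \<in> D \<longleftrightarrow> S \<subseteq> Y))"
proof -
  obtain B where B: "B \<in> D" using cD by fastforce
  have fB: "finite B" "card B = j" using ut_card[OF D B] by auto
  obtain f where f: "\<forall>b\<in>B. f b \<in> D \<and> f b \<noteq> B \<and> B - {b} \<subseteq> f b" and inj: "inj_on f B"
    and nB: "B \<notin> f ` B" and cI: "card (insert B (f ` B)) = j + 1" and sI: "insert B (f ` B) \<subseteq> D"
    by (rule nbrs[OF D _ B]) (use j in auto)
  have Deq: "D = insert B (f ` B)"
    using card_subset_eq[OF ut_fin[OF D] sI] cI cD by simp
  have ex: "\<forall>b\<in>B. \<exists>y. y \<notin> B \<and> f b = insert y (B - {b})"
  proof
    fix b assume b: "b \<in> B"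
    have ffb: "finite (f b)" "card (f b) = j" using ut_card[OF D] f b by auto
    have sub: "B - {b} \<subseteq> f b" using f b by auto
    have "card (f b - (B - {b})) = 1"
      using card_Diff_subset[OF _ sub] fB b ffb j by simp
    then have "\<exists>y. f b - (B - {b}) = {y}" using card_1_singleton_iff by (metis One_nat_def)
    then obtain y where y: "f b - (B - {b}) = {y}" by blast
    have fbeq: "f b = insert y (B - {b})" using y sub by auto
    have "y \<noteq> b"
    proof
      assume "y = b"
      then have "f b = B" using fbeq b by auto
      then show False using f b by auto
    qed
    then have "y \<notin> B" using y by auto
    then show "\<exists>y. y \<notin> B \<and> f b = insert y (B - {b})" using fbeq by blast
  qed
  obtain yf where yf: "\<forall>b\<in>B. yf b \<notin> B \<and> f b = insert (yf b) (B - {b})"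
    using bchoice[OF ex] by blast
  have same: "yf b = yf c" if b: "b \<in> B" and c: "c \<in> B" and bc: "b \<noteq> c" for b c
  proof -
    define S where "S = insert (yf b) (B - {b, c})"
    have fS: "finite S" using fB S_def by simp
    have "card (B - {b,c}) = j - 2" using fB b c bc by (simp add: card_Diff_subset)
    then have cS: "card S + 1 = j" using S_def yf b j fB by simp
    have SB: "S \<subseteq> f b" using yf b S_def by auto
    obtain B'' where B'': "B'' \<in> D" "B'' \<noteq> f b" "S \<subseteq> B''"
      using other_block[OF D _ SB fS cS] f b by blast
    have "B'' \<noteq> B" using B'' yf b S_def by auto
    then obtain d where d: "d \<in> B" "B'' = f d" using B'' Deq by auto
    have "d = c"
    proof (rule ccontr)
      assume "d \<noteq> c"
      moreover have "d \<noteq> b" using d B'' by auto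
      ultimately have "d \<in> S" using d S_def by auto
      then have "d \<in> f d" using B'' d by auto
      then show False using yf d by auto
    qed
    then have "yf b \<in> insert (yf c) (B - {c})" using B'' d yf c S_def by auto
    then show ?thesis using yf b by auto
  qed
  obtain b0 where b0: "b0 \<in> B" using fB j by fastforce
  define y where "y = yf b0"
  have yB: "y \<notin> B" using yf b0 y_def by auto
  have fy: "\<forall>b\<in>B. f b = insert y (B - {b})"
    using yf same b0 y_def by metis
  define Y where "Y = insert y B"
  have "finite Y" "card Y = j + 1" using Y_def fB yB by auto
  moreover have "Y \<subseteq> \<Union>D"
  proof -
    have "y \<in> f b0" using fy b0 by auto
    then show ?thesis using Y_def Deq b0 by auto
  qed
  moreover have "\<forall>S. finite S \<and> card S = j \<longrightarrow> (S \<in> D \<longleftrightarrow> S \<subseteq> Y)"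
  proof (intro allI impI)
    fix S :: "'a set" assume S: "finite S \<and> card S = j"
    show "S \<in> D \<longleftrightarrow> S \<subseteq> Y"
    proof
      assume "S \<in> D"
      then show "S \<subseteq> Y" using Deq fy Y_def by auto
    next
      assume SY: "S \<subseteq> Y"
      have "card (Y - S) = 1" using card_Diff_subset[OF _ SY] S \<open>card Y = j + 1\<close> by simp
      then have "\<exists>z. Y - S = {z}" using card_1_singleton_iff by (metis One_nat_def)
      then obtain z where z: "Y - S = {z}" by blast
      have Seq: "S = Y - {z}" using z SY by auto
      show "S \<in> D"
      proof (cases "z = y")
        case True
        then have "S = B" using Seq Y_def yB by auto
        then show ?thesis using B by simp
      next
        case False
        then have "z \<in> B" using z Y_def by auto
        moreover have "S = insert y (B - {z})" using Seq Y_def False by auto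
        ultimately show ?thesis using fy Deq by auto
      qed
    qed
  qed
  ultimately show ?thesis by blast
qed



lemma G6:
  fixes U :: "'a set set"
  assumes U: "ut k U" and k: "3 \<le> k" and dx: "deg U x = k"
  shows "\<exists>U'::'a set set. ut k U' \<and> (card U' + k = card U + 1 \<or> card U' + k + 1 = card U)"
proof -
  let ?D = "der U x"
  have D: "ut (k-1) ?D" "card ?D = k" using G1[OF U] k dx by auto
  obtain Y where Y: "finite Y" "card Y = k" "Y \<subseteq> \<Union>?D"
      "\<forall>S. finite S \<and> card S = k-1 \<longrightarrow> (S \<in> ?D \<longleftrightarrow> S \<subseteq> Y)"
    using G3[OF D(1)] k D(2) by fastforce
  have xY: "x \<notin> Y" using Y(3) unfolding der_def by auto
  have fU: "finite U" using ut_fin[OF U] .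
  define U1 where "U1 = {B\<in>U. x\<notin>B}"
  have fU1: "finite U1" using fU U1_def by simp
  have cardU1: "card U1 + k = card U"
  proof -
    have "U = U1 \<union> {B\<in>U. x\<in>B}" "U1 \<inter> {B\<in>U. x\<in>B} = {}" using U1_def by auto
    then have "card U = card U1 + card {B\<in>U. x\<in>B}" using fU card_Un_disjoint
      by (metis (no_types, lifting) finite_Un)
    then show ?thesis using dx unfolding deg_def by simp
  qed
  have key: "odd (card {B\<in>U1. S \<subseteq> B}) \<longleftrightarrow> S \<subseteq> Y" if S: "finite S" "card S + 1 = k" for S
  proof (cases "x \<in> S")
    case True
    then have "{B\<in>U1. S \<subseteq> B} = {}" using U1_def by auto
    then have "card {B\<in>U1. S \<subseteq> B} = 0" by (simp only: card.empty)
    then show ?thesis using True xY by auto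
  next
    case False
    have split: "{B\<in>U. S \<subseteq> B} = {B\<in>U1. S \<subseteq> B} \<union> {B\<in>U. x\<in>B \<and> S \<subseteq> B}"
      "{B\<in>U1. S \<subseteq> B} \<inter> {B\<in>U. x\<in>B \<and> S \<subseteq> B} = {}" using U1_def by auto
    have cS: "card (insert x S) = k" using S False by simp
    have one: "{B\<in>U. x\<in>B \<and> S \<subseteq> B} = (if insert x S \<in> U then {insert x S} else {})"
    proof -
      have eq: "B = insert x S" if "B \<in> U" "x \<in> B" "S \<subseteq> B" for B
      proof -
        have "finite B" "card B = k" using ut_card[OF U that(1)] by auto
        then show ?thesis using card_subset_eq[of B "insert x S"] that cS by auto
      qed
      show ?thesis
      proof (cases "insert x S \<in> U")
        case True
        then have "{B\<in>U. x\<in>B \<and> S \<subseteq> B} = {insert x S}" using eq by blast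
        then show ?thesis using True by simp
      next
        case False
        then have "{B\<in>U. x\<in>B \<and> S \<subseteq> B} = {}" using eq by blast
        then show ?thesis using False by simp
      qed
    qed
    have inD: "insert x S \<in> U \<longleftrightarrow> S \<in> ?D"
    proof
      assume "insert x S \<in> U"
      then have "insert x S - {x} \<in> ?D" unfolding der_def by auto
      then show "S \<in> ?D" using False by simp
    next
      assume "S \<in> ?D"
      then obtain B where "B \<in> U" "x \<in> B" "S = B - {x}" unfolding der_def by auto
      then show "insert x S \<in> U" by (simp add: insert_absorb)
    qed
    have inY: "S \<in> ?D \<longleftrightarrow> S \<subseteq> Y" using Y(4) S by auto
    have "card {B\<in>U. S \<subseteq> B} = card {B\<in>U1. S \<subseteq> B} + card {B\<in>U. x\<in>B \<and> S \<subseteq> B}"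
      using split fU card_Un_disjoint[of "{B\<in>U1. S \<subseteq> B}" "{B\<in>U. x\<in>B \<and> S \<subseteq> B}"] fU1 by simp
    moreover have "even (card {B\<in>U. S \<subseteq> B})" using ut_even[OF U S] .
    ultimately show ?thesis using one inD inY by (auto split: if_splits)
  qed
  define U' where "U' = (if Y \<in> U1 then U1 - {Y} else insert Y U1)"
  have "ut k U'"
    unfolding ut_def
  proof (intro conjI)
    show "finite U'" using fU1 U'_def by simp
    show "\<forall>B\<in>U'. finite B \<and> card B = k"
      using U'_def U1_def ut_card[OF U] Y by auto
    show "\<forall>S. finite S \<and> card S + 1 = k \<longrightarrow> even (card {B \<in> U'. S \<subseteq> B})"
    proof (intro allI impI)
      fix S :: "'a set" assume S: "finite S \<and> card S + 1 = k"
      have fS1: "finite {B\<in>U1. S \<subseteq> B}" using fU1 by simp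
      show "even (card {B \<in> U'. S \<subseteq> B})"
      proof (cases "Y \<in> U1")
        case True
        then have "{B \<in> U'. S \<subseteq> B} = {B\<in>U1. S \<subseteq> B} - (if S \<subseteq> Y then {Y} else {})"
          using U'_def by auto
        moreover have "card ({B\<in>U1. S \<subseteq> B} - (if S \<subseteq> Y then {Y} else {})) =
            card {B\<in>U1. S \<subseteq> B} - (if S \<subseteq> Y then 1 else 0)"
          using True fS1 by (auto simp: card_Diff_singleton)
        moreover have "S \<subseteq> Y \<Longrightarrow> card {B\<in>U1. S \<subseteq> B} \<ge> 1"
          using True fS1 by (metis (mono_tags, lifting) card_0_eq empty_iff mem_Collect_eq less_one not_le)
        ultimately show ?thesis using key[of S] S by auto
      next
        case False
        then have "{B \<in> U'. S \<subseteq> B} = (if S \<subseteq> Y then insert Y {B\<in>U1. S \<subseteq> B} else {B\<in>U1. S \<subseteq> B})"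
          using U'_def by auto
        moreover have "Y \<notin> {B\<in>U1. S \<subseteq> B}" using False by simp
        ultimately show ?thesis using key[of S] S fS1 by auto
      qed
    qed
  qed
  moreover have "card U' + k = card U + 1 \<or> card U' + k + 1 = card U"
  proof (cases "Y \<in> U1")
    case True
    then have "card U' + 1 = card U1" using U'_def fU1
      by (metis card_Diff1_less card_Diff_singleton Suc_eq_plus1 Suc_pred' gr_zeroI less_nat_zero_code)
    then show ?thesis using cardU1 by simp
  next
    case False
    then have "card U' = card U1 + 1" using U'_def fU1 by simp
    then show ?thesis using cardU1 by simp
  qed
  ultimately show ?thesis by (intro exI[of _ U']) simp
qed



lemma fin_Union: "ut k U \<Longrightarrow> finite (\<Union>U)"
  using ut_fin ut_card by (metis finite_Union)

lemma G7: assumes U: "ut k U" shows "(\<Sum>x\<in>\<Union>U. deg U x) = k * card U"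
proof -
  have fW: "finite (\<Union>U)" using fin_Union[OF U] .
  have fU: "finite U" using ut_fin[OF U] .
  have "(\<Sum>x\<in>\<Union>U. deg U x) = (\<Sum>x\<in>\<Union>U. \<Sum>B\<in>U. if x \<in> B then 1 else 0)"
    unfolding deg_def using fU by (simp add: sum.If_cases Int_def)
  also have "\<dots> = (\<Sum>B\<in>U. \<Sum>x\<in>\<Union>U. if x \<in> B then 1 else 0)" by (rule sum.swap)
  also have "\<dots> = (\<Sum>B\<in>U. card B)"
  proof (rule sum.cong[OF refl])
    fix B assume "B \<in> U"
    then have "\<Union>U \<inter> B = B" by auto
    then show "(\<Sum>x\<in>\<Union>U. if x \<in> B then 1 else 0) = card B" using fW by (simp add: sum.If_cases)
  qed
  also have "\<dots> = (\<Sum>B\<in>U. k)" using ut_card[OF U] by simp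
  finally show ?thesis by simp
qed

lemma G8: assumes U: "ut k U" shows "card U \<le> card (\<Union>U) choose k"
proof -
  have "U \<subseteq> {B. B \<subseteq> \<Union>U \<and> card B = k}" using ut_card[OF U] by auto
  moreover have "finite {B. B \<subseteq> \<Union>U \<and> card B = k}" using fin_Union[OF U] by simp
  ultimately have "card U \<le> card {B. B \<subseteq> \<Union>U \<and> card B = k}" by (rule card_mono[rotated])
  then show ?thesis using n_subsets[OF fin_Union[OF U]] by simp
qed

lemma deg_pos: assumes U: "ut k U" "x \<in> \<Union>U" shows "deg U x \<noteq> 0"
  using assms ut_fin[OF U(1)] unfolding deg_def by auto

lemma deg_le: assumes U: "ut k U" shows "deg U x \<le> card U"
  unfolding deg_def by (rule card_mono[OF ut_fin[OF U]]) auto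

lemma deg_lower: assumes U: "ut k U" "x \<in> \<Union>U" "2 \<le> k" shows "k \<le> deg U x"
proof -
  have "ut (k-1) (der U x)" "card (der U x) = deg U x" using G1[OF U(1)] U(3) by auto
  then have "k - 1 + 1 \<le> deg U x" using LB[of "k-1" "der U x"] deg_pos[OF U(1,2)] U(3) by auto
  then show ?thesis using U(3) by simp
qed

lemma sum_lower: assumes "\<forall>x\<in>W. m \<le> f x" shows "m * card W \<le> (\<Sum>x\<in>W. f x :: nat)"
proof -
  have "(\<Sum>x\<in>W. m) \<le> (\<Sum>x\<in>W. f x)" using assms by (intro sum_mono) auto
  then show ?thesis by (simp add: mult.commute)
qed

lemma C5: fixes D :: "'a set set" assumes D: "ut 3 D" shows "card D \<noteq> 5"
proof
  assume c: "card D = 5"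
  have "\<forall>z\<in>\<Union>D. 4 \<le> deg D z"
  proof
    fix z assume z: "z \<in> \<Union>D"
    have "3 \<le> deg D z" using deg_lower[OF D z] by simp
    moreover have "deg D z \<noteq> 3"
    proof
      assume "deg D z = 3"
      then have "\<exists>U'::'a set set. ut 3 U' \<and> (card U' + 3 = 5 + 1 \<or> card U' + 3 + 1 = 5)"
        using G6[OF D _ \<open>deg D z = 3\<close>] c by simp
      then obtain U' :: "'a set set" where U': "ut 3 U'" "card U' + 3 = 5 + 1 \<or> card U' + 3 + 1 = 5"
        by blast
      then have "card U' \<noteq> 0" "card U' < 4" by auto
      then show False using LB[OF U'(1)] by auto
    qed
    ultimately show "4 \<le> deg D z" by simp
  qed
  then have "4 * card (\<Union>D) \<le> 3 * 5" using sum_lower[of "\<Union>D" 4 "deg D"] G7[OF D] c by simp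
  then have "card (\<Union>D) \<le> 3" by simp
  then have "card (\<Union>D) choose 3 \<le> 1"
    by (cases "card (\<Union>D)"; auto simp: numeral_eq_Suc less_Suc_eq_le le_Suc_eq)
  then show False using G8[OF D] c by simp
qed

lemma E6: fixes U :: "'a set set" assumes U: "ut 4 U" shows "card U \<noteq> 6"
proof
  assume c: "card U = 6"
  have "\<forall>z\<in>\<Union>U. 6 \<le> deg U z"
  proof
    fix z assume z: "z \<in> \<Union>U"
    have "4 \<le> deg U z" using deg_lower[OF U z] by simp
    moreover have "deg U z \<noteq> 4"
    proof
      assume "deg U z = 4"
      then have "\<exists>U'::'a set set. ut 4 U' \<and> (card U' + 4 = 6 + 1 \<or> card U' + 4 + 1 = 6)"
        using G6[OF U _ \<open>deg U z = 4\<close>] c by simp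
      then obtain U' :: "'a set set" where U': "ut 4 U'" "card U' + 4 = 6 + 1 \<or> card U' + 4 + 1 = 6"
        by blast
      then have "card U' \<noteq> 0" "card U' < 5" by auto
      then show False using LB[OF U'(1)] by auto
    qed
    moreover have "deg U z \<noteq> 5"
      using C5[of "der U z"] G1[OF U, of z] by auto
    ultimately show "6 \<le> deg U z" by simp
  qed
  then have "6 * card (\<Union>U) \<le> 4 * 6" using sum_lower[of "\<Union>U" 6 "deg U"] G7[OF U] c by simp
  then have "card (\<Union>U) \<le> 4" by simp
  then have "card (\<Union>U) choose 4 \<le> 1"
    by (cases "card (\<Union>U)"; auto simp: numeral_eq_Suc less_Suc_eq_le le_Suc_eq)
  then show False using G8[OF U] c by simp
qed

lemma W6: fixes U :: "'a set set" assumes U: "ut 4 U" and c: "card U = 9" shows "card (\<Union>U) = 6"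
proof -
  have "\<forall>z\<in>\<Union>U. 6 \<le> deg U z"
  proof
    fix z assume z: "z \<in> \<Union>U"
    have "4 \<le> deg U z" using deg_lower[OF U z] by simp
    moreover have "deg U z \<noteq> 4"
    proof
      assume "deg U z = 4"
      then have "\<exists>U'::'a set set. ut 4 U' \<and> (card U' + 4 = 9 + 1 \<or> card U' + 4 + 1 = 9)"
        using G6[OF U _ \<open>deg U z = 4\<close>] c by simp
      then obtain U' :: "'a set set" where U': "ut 4 U'" "card U' + 4 = 9 + 1 \<or> card U' + 4 + 1 = 9"
        by blast
      then have "card U' = 6 \<or> card U' = 4" by auto
      then show False using LB[OF U'(1)] E6[OF U'(1)] by auto
    qed
    moreover have "deg U z \<noteq> 5"
      using C5[of "der U z"] G1[OF U, of z] by auto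
    ultimately show "6 \<le> deg U z" by simp
  qed
  then have "6 * card (\<Union>U) \<le> 4 * 9" using sum_lower[of "\<Union>U" 6 "deg U"] G7[OF U] c by simp
  then have le: "card (\<Union>U) \<le> 6" by simp
  have "9 \<le> card (\<Union>U) choose 4" using G8[OF U] c by simp
  moreover have "card (\<Union>U) \<le> 5 \<Longrightarrow> card (\<Union>U) choose 4 \<le> 5"
    by (cases "card (\<Union>U)"; auto simp: numeral_eq_Suc less_Suc_eq_le le_Suc_eq)
  ultimately show ?thesis using le by linarith
qed



lemma final:
  fixes U :: "'a set set"
  assumes fW: "finite W" and cW: "card W = 6" and sub: "\<forall>B\<in>U. B \<subseteq> W \<and> card B = 4"
    and cU: "card U = 9"
    and ev: "\<forall>T. T \<subseteq> W \<and> card T = 3 \<longrightarrow> even (card {B\<in>U. T \<subseteq> B})"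
  shows "\<exists>f. inj_on f {1..6::nat} \<and> f ` {1..6} \<subseteq> W \<and> U = (\<lambda>u. f ` u) ` P_trade"
proof -
  define E where "E x y \<longleftrightarrow> W - {x,y} \<notin> U" for x y
  have Esym: "E x y = E y x" for x y by (simp add: E_def insert_commute)
  have key: "E q r = (E p q = E p r)"
    if p: "p \<in> W" and q: "q \<in> W" and r: "r \<in> W" and pq: "p \<noteq> q" and pr: "p \<noteq> r" and qr: "q \<noteq> r"
    for p q r
  proof -
    define T where "T = W - {p,q,r}"
    have "card {p,q,r} = 3" using pq pr qr by simp
    then have cT: "card T = 3" using T_def card_Diff_subset[of "{p,q,r}" W] p q r cW by simp
    define X1 where "X1 = W - {q,r}"
    define X2 where "X2 = W - {p,r}"
    define X3 where "X3 = W - {p,q}"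
    have "{B\<in>U. T \<subseteq> B} = {X1,X2,X3} \<inter> U"
    proof (intro equalityI subsetI)
      fix B assume "B \<in> {B\<in>U. T \<subseteq> B}"
      then have B: "B \<in> U" "T \<subseteq> B" "B \<subseteq> W" "card B = 4" using sub by auto
      have fB: "finite B" using B(3) fW finite_subset by blast
      have Bsplit: "B = T \<union> (B \<inter> {p,q,r})" using B T_def by auto
      have "card B = card T + card (B \<inter> {p,q,r})"
        using fB fW T_def by (subst Bsplit, subst card_Un_disjoint) auto
      then have "card (B \<inter> {p,q,r}) = 1" using B(4) cT by simp
      then have "\<exists>z. B \<inter> {p,q,r} = {z}" using card_1_singleton_iff by (metis One_nat_def)
      then obtain z where z: "B \<inter> {p,q,r} = {z}" by blast
      then have "z = p \<or> z = q \<or> z = r" by auto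
      moreover have "B = T \<union> {z}" using Bsplit z by simp
      ultimately have "B = X1 \<or> B = X2 \<or> B = X3"
        unfolding X1_def X2_def X3_def T_def using p q r pq pr qr by auto
      then show "B \<in> {X1,X2,X3} \<inter> U" using B by auto
    next
      fix B assume "B \<in> {X1,X2,X3} \<inter> U"
      then show "B \<in> {B\<in>U. T \<subseteq> B}" unfolding X1_def X2_def X3_def T_def by auto
    qed
    moreover have "T \<subseteq> W" using T_def by auto
    ultimately have evn: "even (card ({X1,X2,X3} \<inter> U))" using ev cT by metis
    have d12: "X1 \<noteq> X2" using X1_def X2_def p pq pr by blast
    have d13: "X1 \<noteq> X3" using X1_def X3_def p pq pr by blast
    have d23: "X2 \<noteq> X3" using X2_def X3_def q pq qr by blast
    have "E q r = (X1 \<notin> U)" "E p q = (X3 \<notin> U)" "E p r = (X2 \<notin> U)"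
      unfolding E_def X1_def X2_def X3_def by auto
    then show ?thesis using evn d12 d13 d23
      by (cases "X1 \<in> U"; cases "X2 \<in> U"; cases "X3 \<in> U"; simp)
  qed
  obtain p0 where p0: "p0 \<in> W" using cW by fastforce
  define A where "A = {y\<in>W. y = p0 \<or> E p0 y}"
  define C where "C = W - A"
  have side: "E x y = (x \<in> A \<longleftrightarrow> y \<in> A)" if "x \<in> W" "y \<in> W" "x \<noteq> y" for x y
  proof (cases "x = p0")
    case True then show ?thesis using that A_def by auto
  next
    case False
    show ?thesis
    proof (cases "y = p0")
      case True then show ?thesis using that A_def False Esym by auto
    next
      case False2: False
      then show ?thesis using key[of p0 x y] that p0 False A_def by auto
    qed
  qed
  have AW: "A \<subseteq> W" and CW: "C \<subseteq> W" and AC: "A \<inter> C = {}" and WAC: "W = A \<union> C"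
    using A_def C_def by auto
  have Ueq: "U = (\<lambda>(a,c). W - {a,c}) ` (A \<times> C)"
  proof (intro equalityI subsetI)
    fix B assume B: "B \<in> U"
    then have BW: "B \<subseteq> W" "card B = 4" using sub by auto
    have "card (W - B) = 2" using card_Diff_subset[OF _ BW(1)] BW fW cW finite_subset by fastforce
    then obtain x y where xy: "W - B = {x,y}" "x \<noteq> y" using card_2_iff by metis
    have xyW: "x \<in> W" "y \<in> W" using xy by auto
    have Beq: "B = W - {x,y}" using xy BW by auto
    then have "\<not> E x y" using B E_def by simp
    then have "(x \<in> A \<and> y \<in> C) \<or> (y \<in> A \<and> x \<in> C)" using side[OF xyW xy(2)] xyW C_def by auto
    then show "B \<in> (\<lambda>(a,c). W - {a,c}) ` (A \<times> C)"
    proof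
      assume "x \<in> A \<and> y \<in> C" then show ?thesis using Beq by force
    next
      assume "y \<in> A \<and> x \<in> C" then show ?thesis using Beq by (force simp: insert_commute)
    qed
  next
    fix B assume "B \<in> (\<lambda>(a,c). W - {a,c}) ` (A \<times> C)"
    then obtain a c where ac: "a \<in> A" "c \<in> C" "B = W - {a,c}" by auto
    then have "a \<noteq> c" "a \<in> W" "c \<in> W" using AC AW CW by auto
    then have "\<not> E a c" using side ac C_def by auto
    then show "B \<in> U" using ac E_def by simp
  qed
  have inj: "inj_on (\<lambda>(a,c). W - {a,c}) (A \<times> C)"
  proof (rule inj_onI, clarify)
    fix a c a' c' assume H: "a \<in> A" "c \<in> C" "a' \<in> A" "c' \<in> C" "W - {a,c} = W - {a',c'}"
    then have "{a,c} \<subseteq> W" "{a',c'} \<subseteq> W" using AW CW by auto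
    then have "{a,c} = {a',c'}" using H(5) by (metis Diff_Diff_Int inf.absorb_iff2)
    then show "a = a' \<and> c = c'" using H AC by (auto simp: doubleton_eq_iff)
  qed
  have fA: "finite A" "finite C" using AW CW fW finite_subset by auto
  have "card U = card A * card C" using Ueq inj card_image card_cartesian_product by metis
  moreover have "card A + card C = 6" using card_Un_disjoint[OF fA AC] WAC cW by simp
  ultimately have "card A * (6 - card A) = 9" "card A \<le> 6" using cU
    by (metis add_diff_cancel_left', linarith)
  then have cA: "card A = 3"
    by (cases "card A"; auto simp: numeral_eq_Suc le_Suc_eq)
  then have cC: "card C = 3" using \<open>card A + card C = 6\<close> by simp
  obtain a1 a2 a3 where a: "A = {a1,a2,a3}" "a1 \<noteq> a2" "a2 \<noteq> a3" "a1 \<noteq> a3"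
    using cA card_3_iff by metis
  obtain c1 c2 c3 where c: "C = {c1,c2,c3}" "c1 \<noteq> c2" "c2 \<noteq> c3" "c1 \<noteq> c3"
    using cC card_3_iff by metis
  have ac: "ai \<noteq> cj" if "ai \<in> A" "cj \<in> C" for ai cj using that AC by auto
  define f :: "nat \<Rightarrow> 'a" where
    "f i = (if i = 1 then a1 else if i = 2 then a2 else if i = 3 then a3 else
            if i = 4 then c1 else if i = 5 then c2 else c3)" for i
  have W: "W = {a1,a2,a3,c1,c2,c3}" using WAC a c by auto
  have dist: "a1 \<noteq> c1" "a1 \<noteq> c2" "a1 \<noteq> c3" "a2 \<noteq> c1" "a2 \<noteq> c2" "a2 \<noteq> c3"
     "a3 \<noteq> c1" "a3 \<noteq> c2" "a3 \<noteq> c3" using AC unfolding a(1) c(1) by auto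
  have I6: "{1..6::nat} = {1,2,3,4,5,6}" by auto
  have fv: "f 1 = a1" "f (Suc 0) = a1" "f 2 = a2" "f 3 = a3" "f 4 = c1" "f 5 = c2" "f 6 = c3" by (simp_all add: f_def)
  have dist2: "a1 \<noteq> a2" "a1 \<noteq> a3" "a2 \<noteq> a3" "c1 \<noteq> c2" "c1 \<noteq> c3" "c2 \<noteq> c3"
    using a c by auto
  have "inj_on f {1..6}" unfolding I6 using dist dist2 dist[symmetric] dist2[symmetric]
    by (simp add: fv)
  moreover have "f ` {1..6} \<subseteq> W" unfolding I6 W by (simp add: fv)
  moreover have "U = (\<lambda>u. f ` u) ` P_trade"
  proof -
    have e: "W - {a3,c1} = {a1,a2,c2,c3}" "W - {a2,c1} = {a1,a3,c2,c3}" "W - {a1,c1} = {a2,a3,c2,c3}"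
      "W - {a3,c2} = {a1,a2,c1,c3}" "W - {a2,c2} = {a1,a3,c1,c3}" "W - {a1,c2} = {a2,a3,c1,c3}"
      "W - {a3,c3} = {a1,a2,c1,c2}" "W - {a2,c3} = {a1,a3,c1,c2}" "W - {a1,c3} = {a2,a3,c1,c2}"
      unfolding W using a c dist by auto
    have "U = (\<lambda>(a,c). W - {a,c}) ` ({a1,a2,a3} \<times> {c1,c2,c3})" using Ueq a c by simp
    also have "\<dots> = {W - {a1,c1}, W - {a1,c2}, W - {a1,c3}, W - {a2,c1}, W - {a2,c2}, W - {a2,c3},
                      W - {a3,c1}, W - {a3,c2}, W - {a3,c3}}" by auto
    also have "\<dots> = (\<lambda>u. f ` u) ` P_trade" unfolding e P_trade_def by (simp add: fv insert_commute)
    finally show ?thesis .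
  qed
  ultimately show ?thesis by blast
qed


lemma unitrade_ut:
  fixes U :: "'a set set"
  assumes H: "unitrade 4 V U"
  shows "ut 4 U"
proof -
  have fV: "finite V" and bl: "\<forall>B\<in>U. B \<subseteq> V \<and> card B = 4"
    and ev: "\<forall>S. S \<subseteq> V \<and> card S = 4 - 1 \<longrightarrow> even (card {B\<in>U. S \<subseteq> B})"
    using H unfolding unitrade_def by auto
  have "U \<subseteq> Pow V" using bl by auto
  then have fU: "finite U" using fV finite_subset by blast
  show ?thesis unfolding ut_def
  proof (intro conjI allI impI)
    show "finite U" using fU .
    show "\<forall>B\<in>U. finite B \<and> card B = 4" using bl fV finite_subset by blast
    fix S :: "'a set" assume S: "finite S \<and> card S + 1 = 4"
    show "even (card {B\<in>U. S \<subseteq> B})"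
    proof (cases "S \<subseteq> V")
      case True
      then show ?thesis using ev S by simp
    next
      case False
      then have "{B\<in>U. S \<subseteq> B} = {}" using bl by auto
      then have "card {B\<in>U. S \<subseteq> B} = 0" by (simp only: card.empty)
      then show ?thesis by simp
    qed
  qed
qed

theorem proposition13:
  shows "unitrade 4 {1..6::nat} P_trade \<and> card P_trade = 9 \<and>
    (\<forall>(V::'a set) U. unitrade 4 V U \<and> card U = 9 \<longrightarrow> equivalent {1..6} P_trade V U)"
proof (intro conjI allI impI)
  show "unitrade 4 {1..6::nat} P_trade" "card P_trade = 9" using P_ok by auto
  fix V :: "'a set" and U assume H: "unitrade 4 V U \<and> card U = 9"
  have ut: "ut 4 U" using unitrade_ut H by blast
  have cW: "card (\<Union>U) = 6" using W6[OF ut] H by simp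
  have sub: "\<forall>B\<in>U. B \<subseteq> \<Union>U \<and> card B = 4" using ut_card[OF ut] by auto
  have ev: "\<forall>T. T \<subseteq> \<Union>U \<and> card T = 3 \<longrightarrow> even (card {B\<in>U. T \<subseteq> B})"
  proof (intro allI impI)
    fix T assume T: "T \<subseteq> \<Union>U \<and> card T = 3"
    then have "finite T" using fin_Union[OF ut] finite_subset by blast
    then show "even (card {B\<in>U. T \<subseteq> B})" using ut_even[OF ut] T by simp
  qed
  obtain f where f: "inj_on f {1..6::nat}" "f ` {1..6} \<subseteq> \<Union>U" "U = (\<lambda>u. f ` u) ` P_trade"
    using final[OF fin_Union[OF ut] cW sub _ ev] H by blast
  have UV: "\<Union>U \<subseteq> V" using H unfolding unitrade_def by auto
  show "equivalent {1..6} P_trade V U"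
    unfolding equivalent_def
  proof (intro exI[of _ f] conjI)
    show "inj_on f {1..6}" by (rule f(1))
    show "f ` {1..6} \<subseteq> V" using f(2) UV by (rule subset_trans)
    show "U = (\<lambda>u. f ` u) ` P_trade" by (rule f(3))
  qed
qed

end
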